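(* Let $n\ge1$ and let $\sigma\in(0,1)$, $c,d,\epsilon,l,s,y,y_->0$, $\tau\ge0$ be constants with $s\le l$. For $\alpha>0$ let $\eta=\max(|1-n\alpha l|,|1-n\alpha s|)$ and $$G_\alpha=\begin{bmatrix}\sigma&0&\alpha\\ \alpha cly_-&\eta&0\\ cd\epsilon ly_-(\tau+\alpha lyy_-)&\alpha d\epsilon l^2yy_-&\sigma+\alpha cd\epsilon ly_-\end{bmatrix}.$$ Let $\Delta=nscd\epsilon ly_-(1-\sigma+\tau)$ and $$\overline{\alpha}=\min\left\{\frac{\sqrt{\Delta^2+4ns(1-\sigma)^2cd\epsilon l^2yy_-^2(l+ns)}-\Delta}{2cd\epsilon l^2yy_-^2(l+ns)},\ \frac{1}{nl}\right\}.$$ Then the spectral radius satisfies $\rho(G_\alpha)<1$ for every $\alpha\in(0,\overline{\alpha})$.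
   Context: In the paper these constants arise as follows (not needed for the statement): $\sigma$ is the value of a matrix norm of $A-A_\infty$ for the column-stochastic weight matrix $A$ and its limit $A_\infty$; $c,d$ are norm-equivalence constants; $\tau=\|A-I\|_2$, $\epsilon=\|I-A_\infty\|_2$; $y,y_-$ are uniform bounds on $\|Y_k\|_2$, $\|Y_k^{-1}\|_2$; $l,s$ are the Lipschitz and strong-convexity constants of the local objectives. $\rho(\cdot)$ denotes spectral radius. *)

theory Defs
  imports Complex_Main "Jordan_Normal_Form.Spectral_Radius"
begin

definition G_mat :: "nat \<Rightarrow> real \<Rightarrow> real \<Rightarrow> real \<Rightarrow> real \<Rightarrow> real \<Rightarrow> real \<Rightarrow> real \<Rightarrow> real \<Rightarrow> real \<Rightarrow> real \<Rightarrow> real mat" where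
  "G_mat n \<sigma> c d \<epsilon> l s y ym \<tau> \<alpha> =
     (let \<eta> = max \<bar>1 - real n * \<alpha> * l\<bar> \<bar>1 - real n * \<alpha> * s\<bar> in
      mat_of_rows_list 3
        [[\<sigma>, 0, \<alpha>],
         [\<alpha> * c * l * ym, \<eta>, 0],
         [c * d * \<epsilon> * l * ym * (\<tau> + \<alpha> * l * y * ym), \<alpha> * d * \<epsilon> * l^2 * y * ym, \<sigma> + \<alpha> * c * d * \<epsilon> * l * ym]])"

definition alpha_bar :: "nat \<Rightarrow> real \<Rightarrow> real \<Rightarrow> real \<Rightarrow> real \<Rightarrow> real \<Rightarrow> real \<Rightarrow> real \<Rightarrow> real \<Rightarrow> real \<Rightarrow> real" where
  "alpha_bar n \<sigma> c d \<epsilon> l s y ym \<tau> =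
     (let \<Delta> = real n * s * c * d * \<epsilon> * l * ym * (1 - \<sigma> + \<tau>);
          K = c * d * \<epsilon> * l^2 * y * ym^2 * (l + real n * s) in
      min ((sqrt (\<Delta>^2 + 4 * real n * s * (1 - \<sigma>)^2 * K) - \<Delta>) / (2 * K))
          (1 / (real n * l)))"

end

theory Submission imports Defs begin

lemma posvec_sr:
  fixes A :: "complex mat" and g :: "nat \<Rightarrow> nat \<Rightarrow> real" and v :: "nat \<Rightarrow> real"
  assumes A: "A \<in> carrier_mat n n" and n: "n > 0"
    and Ag: "\<And>i j. i < n \<Longrightarrow> j < n \<Longrightarrow> A $$ (i,j) = complex_of_real (g i j)"
    and g0: "\<And>i j. i < n \<Longrightarrow> j < n \<Longrightarrow> g i j \<ge> 0"
    and v0: "\<And>i. i < n \<Longrightarrow> v i > 0"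
    and gv: "\<And>i. i < n \<Longrightarrow> (\<Sum>j<n. g i j * v j) < v i"
  shows "spectral_radius A < 1"
proof -
  from spectral_radius_mem_max(1)[OF A n] obtain lam where
    lam: "lam \<in> spectrum A" and sr: "spectral_radius A = norm lam" by auto
  from lam obtain x where ev: "eigenvector A x lam" unfolding spectrum_def eigenvalue_def by auto
  have dr: "dim_row A = n" using A by auto
  have dc: "dim_col A = n" using A by auto
  from ev have x: "x \<in> carrier_vec n" and xnz: "x \<noteq> 0\<^sub>v n" and Ax: "A *\<^sub>v x = lam \<cdot>\<^sub>v x"
    unfolding eigenvector_def dr by auto
  have dx: "dim_vec x = n" using x by auto
  define r where "r i = norm (x $ i) / v i" for i
  define t where "t = Max (r ` {..<n})"
  have fin: "finite (r ` {..<n})" by auto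
  have ne: "r ` {..<n} \<noteq> {}" using n by auto
  obtain i where i: "i < n" and ri: "r i = t"
    using Max_in[OF fin ne] unfolding t_def by auto
  have rle: "r j \<le> t" if "j < n" for j unfolding t_def using that fin by auto
  from xnz obtain k where k: "k < n" and xk: "x $ k \<noteq> 0"
    using x by (metis eq_vecI index_zero_vec(1) index_zero_vec(2) carrier_vecD)
  have "r k > 0" unfolding r_def using xk v0[OF k] by auto
  hence tpos: "t > 0" using rle[OF k] by auto
  have xj: "norm (x $ j) \<le> t * v j" if "j < n" for j
    using rle[OF that] v0[OF that] unfolding r_def by (simp add: divide_le_eq)
  have xi: "norm (x $ i) = t * v i" using ri v0[OF i] unfolding r_def by (simp add: divide_eq_eq)
  have "(A *\<^sub>v x) $ i = (\<Sum>j<n. A $$ (i,j) * x $ j)"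
    using i dr dc dx by (auto simp: scalar_prod_def atLeast0LessThan intro!: sum.cong)
  hence "lam * x $ i = (\<Sum>j<n. complex_of_real (g i j) * x $ j)"
    using Ax i dx Ag[OF i] by simp
  hence "norm lam * norm (x $ i) = norm (\<Sum>j<n. complex_of_real (g i j) * x $ j)"
    by (metis norm_mult)
  also have "\<dots> \<le> (\<Sum>j<n. norm (complex_of_real (g i j) * x $ j))" by (rule norm_sum)
  also have "\<dots> = (\<Sum>j<n. g i j * norm (x $ j))"
    by (rule sum.cong, auto simp: norm_mult g0[OF i])
  also have "\<dots> \<le> (\<Sum>j<n. g i j * (t * v j))"
    by (rule sum_mono, auto intro!: mult_left_mono xj g0[OF i])
  also have "\<dots> = t * (\<Sum>j<n. g i j * v j)" by (simp add: sum_distrib_left algebra_simps)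
  also have "\<dots> < t * v i" using gv[OF i] tpos by simp
  finally have "norm lam * (t * v i) < 1 * (t * v i)" using xi by simp
  hence "norm lam < 1" using tpos v0[OF i]
    by (metis mult_less_cancel_right_pos mult_pos_pos)
  thus ?thesis using sr by simp
qed


theorem lemma4:
  fixes n :: nat and \<sigma> c d \<epsilon> l s y ym \<tau> \<alpha> :: real
  assumes "n \<ge> 1"
    and "0 < \<sigma>" "\<sigma> < 1"
    and "c > 0" "d > 0" "\<epsilon> > 0" "l > 0" "s > 0" "y > 0" "ym > 0"
    and "\<tau> \<ge> 0" "s \<le> l"
    and "0 < \<alpha>" "\<alpha> < alpha_bar n \<sigma> c d \<epsilon> l s y ym \<tau>"
  shows "spectral_radius (map_mat complex_of_real (G_mat n \<sigma> c d \<epsilon> l s y ym \<tau> \<alpha>)) < 1"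
proof -
  note A = assms
  define N where "N = real n"
  have N: "N \<ge> 1" using A(1) unfolding N_def by simp
  define \<Delta> where "\<Delta> = N * s * c * d * \<epsilon> * l * ym * (1 - \<sigma> + \<tau>)"
  define K where "K = c * d * \<epsilon> * l^2 * y * ym^2 * (l + N * s)"
  have Kp: "K > 0" unfolding K_def using A N by (intro mult_pos_pos add_pos_pos) auto
  have Dp: "\<Delta> > 0" unfolding \<Delta>_def using A N by (intro mult_pos_pos add_pos_nonneg) auto
  have a1: "\<alpha> < 1 / (N * l)" and a2: "\<alpha> < (sqrt (\<Delta>^2 + 4 * N * s * (1 - \<sigma>)^2 * K) - \<Delta>) / (2 * K)"
    using A(14) unfolding alpha_bar_def Let_def N_def[symmetric] \<Delta>_def[symmetric] K_def[symmetric] by auto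
  have Nal: "N * \<alpha> * l < 1" using a1 N A by (simp add: field_simps)
  have eta: "max \<bar>1 - N * \<alpha> * l\<bar> \<bar>1 - N * \<alpha> * s\<bar> = 1 - N * \<alpha> * s"
  proof -
    have "N * \<alpha> * s \<le> N * \<alpha> * l" using A N by (intro mult_left_mono) auto
    moreover have "N * \<alpha> * s > 0" using A N by auto
    ultimately show ?thesis using Nal by auto
  qed
  have "2 * K * \<alpha> + \<Delta> < sqrt (\<Delta>^2 + 4 * N * s * (1 - \<sigma>)^2 * K)"
    using a2 Kp by (simp add: field_simps)
  hence "(2 * K * \<alpha> + \<Delta>)^2 < (sqrt (\<Delta>^2 + 4 * N * s * (1 - \<sigma>)^2 * K))^2"
    using Kp Dp A by (intro power_strict_mono) auto
  also have "\<dots> = \<Delta>^2 + 4 * N * s * (1 - \<sigma>)^2 * K"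
    using Kp Dp A N by (intro real_sqrt_pow2) auto
  finally have h: "(2 * K * \<alpha> + \<Delta>)^2 < \<Delta>^2 + 4 * N * s * (1 - \<sigma>)^2 * K" .
  have "(4 * K) * (K * \<alpha>^2 + \<Delta> * \<alpha>) < (4 * K) * (N * s * (1 - \<sigma>)^2)"
    using h by (simp add: power2_eq_square algebra_simps)
  hence quad: "K * \<alpha>^2 + \<Delta> * \<alpha> < N * s * (1 - \<sigma>)^2"
    using Kp by (simp add: mult_less_cancel_left_pos)
  define v2 where "v2 t = c * l * ym / (N * s) * (1 + t)" for t :: real
  define v3 where "v3 t = (1 - \<sigma>) * (1 - t) / \<alpha>" for t :: real
  define D where "D t = c * d * \<epsilon> * l * ym * (\<tau> + \<alpha> * l * y * ym) + \<alpha> * d * \<epsilon> * l^2 * y * ym * v2 t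
      + (\<sigma> + \<alpha> * c * d * \<epsilon> * l * ym) * v3 t - v3 t" for t
  have "D 0 * (\<alpha> * N * s) = K * \<alpha>^2 + \<Delta> * \<alpha> - N * s * (1 - \<sigma>)^2"
    unfolding D_def v2_def v3_def K_def \<Delta>_def using A N
    using A N apply (simp add: divide_simps) by (simp add: power2_eq_square power3_eq_cube algebra_simps)
  hence "D 0 * (\<alpha> * N * s) < 0" using quad by simp
  hence D0: "D 0 < 0" using A N by (simp add: mult_less_0_iff)
  have Daff: "D = (\<lambda>t. D 0 + t * (D 1 - D 0))"
    unfolding D_def v2_def v3_def using A N apply (intro ext) apply (simp add: divide_simps) by (simp add: algebra_simps)
  have "isCont D 0" by (subst Daff) (intro continuous_intros)
  hence "(D \<longlongrightarrow> D 0) (at_right 0)"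
    by (simp add: isCont_def filterlim_at_split)
  hence ev1: "eventually (\<lambda>t. D t < 0) (at_right 0)" using D0 by (rule order_tendstoD)
  have ev2: "eventually (\<lambda>t. t < (1::real)) (at_right 0)"
    by (subst eventually_at_right[where y="1::real"]) (auto intro!: exI[of _ 1])
  have ev3: "eventually (\<lambda>t. t > (0::real)) (at_right 0)" by (simp add: eventually_at_right_less)
  obtain t where t: "D t < 0" "t < 1" "t > 0"
    using eventually_happens[OF eventually_conj[OF ev1 eventually_conj[OF ev2 ev3]]] by auto
  define rows where "rows = [[\<sigma>, 0, \<alpha>],
         [\<alpha> * c * l * ym, 1 - N * \<alpha> * s, 0],
         [c * d * \<epsilon> * l * ym * (\<tau> + \<alpha> * l * y * ym), \<alpha> * d * \<epsilon> * l^2 * y * ym, \<sigma> + \<alpha> * c * d * \<epsilon> * l * ym]]"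
  have G: "G_mat n \<sigma> c d \<epsilon> l s y ym \<tau> \<alpha> = mat 3 3 (\<lambda>(i,j). rows ! i ! j)"
    unfolding G_mat_def Let_def N_def[symmetric] eta rows_def mat_of_rows_list_def by (simp add: numeral_3_eq_3)
  define g where "g i j = rows ! i ! j" for i j :: nat
  define v where "v i = (if i = 0 then 1 else if i = 1 then v2 t else v3 t)" for i :: nat
  have i3: "i < 3 \<Longrightarrow> i = 0 \<or> i = 1 \<or> i = 2" for i :: nat by auto
  have s3: "(\<Sum>j<3. f j) = f 0 + f 1 + (f 2 :: real)" for f :: "nat \<Rightarrow> real"
  proof -
    have "{..<3::nat} = {0,1,2}" by auto
    thus ?thesis by simp
  qed
  have v2p: "v2 t > 0" unfolding v2_def using A N t by (intro mult_pos_pos divide_pos_pos) auto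
  have v3p: "v3 t > 0" unfolding v3_def using A N t by (intro mult_pos_pos divide_pos_pos) auto
  have Nas: "N * \<alpha> * s < 1" using Nal A N \<open>s \<le> l\<close>
    by (smt (verit) mult_left_mono mult_nonneg_nonneg)
  show ?thesis unfolding G
  proof (rule posvec_sr[where g = g and v = v])
    show "i < 3 \<Longrightarrow> j < 3 \<Longrightarrow> map_mat complex_of_real (mat 3 3 (\<lambda>(i, j). rows ! i ! j)) $$ (i, j) = complex_of_real (g i j)" for i j
      unfolding g_def by simp
    show "i < 3 \<Longrightarrow> j < 3 \<Longrightarrow> 0 \<le> g i j" for i j
      using i3[of i] i3[of j] A N Nas unfolding g_def rows_def
      by (auto intro!: mult_nonneg_nonneg add_nonneg_nonneg)
    show "i < 3 \<Longrightarrow> 0 < v i" for i unfolding v_def using v2p v3p by auto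
    show "i < 3 \<Longrightarrow> (\<Sum>j<3. g i j * v j) < v i" for i
    proof -
      assume "i < 3"
      then consider "i = 0" | "i = 1" | "i = 2" using i3 by blast
      then show ?thesis
      proof cases
        case 1
        have "\<alpha> * v3 t < 1 - \<sigma>" unfolding v3_def using A t by (simp add: field_simps)
        then show ?thesis unfolding s3 using 1 by (simp add: g_def v_def rows_def)
      next
        case 2
        have "c * l * ym < N * s * v2 t" unfolding v2_def using A N t by (simp add: field_simps)
        hence "\<alpha> * (c * l * ym) < \<alpha> * (N * s * v2 t)" using A by simp
        then show ?thesis unfolding s3 using 2 by (simp add: g_def v_def rows_def algebra_simps)
      next
        case 3
        then show ?thesis unfolding s3 using t(1) by (simp add: g_def v_def rows_def D_def)
      qed
    qed
  qed auto
qed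
end
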